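(* Let $F\in\mathcal E(\lambda,\Lambda)$ be concave and let $v$ be a bounded viscosity solution of $F(D^2v)=0$ in $B_1^+$ and in $B_1^-$, $v^+_{x_n}-v^-_{x_n}=0$ on $T$. Then $v\in C^{2,\bar{\bar\alpha}}(\overline{B_{1/2}})$ and $\|v\|_{C^{2,\bar{\bar\alpha}}(\overline{B_{1/2}})}\le C\|v\|_{L^\infty(B_1)}$, with $C>0$ depending only on $n,\lambda,\Lambda$.
   Context: $\mathcal E(\lambda,\Lambda)$: $F:\mathcal S^n\to\mathbb R$ with $F(0)=0$ and $\lambda\|N\|\le F(M+N)-F(M)\le\Lambda\|N\|$ for $N\ge0$. $\bar{\bar\alpha}\in(0,1)$, depending only on $n,\lambda,\Lambda$, is an exponent of universal interior $C^{2,\bar{\bar\alpha}}$ regularity (with estimate $\|w\|_{C^{2,\bar{\bar\alpha}}(\overline{B_{1/2}})}\le C\|w\|_{L^\infty(B_1)}$) for viscosity solutions of $F(D^2w)=0$ in $B_1$ with $F\in\mathcal E(\lambda,\Lambda)$ concave. $B_1^\pm=B_1\cap\{\pm x_n>0\}$, $T=B_1\cap\{x_n=0\}$. Viscosity solution of the flat problem: continuous $v$ which is a sub- and supersolution, where subsolution means for $\varphi$ touching $v$ from above at $x_0$: if $x_0\in B_1^\pm$ and $\varphi$ is $C^2$ near $x_0$, $F(D^2\varphi(x_0))\ge0$; if $x_0\in T$ and $\varphi$ is continuous with restrictions $\varphi^\pm$ to $\overline{B_\delta(x_0)\cap\{\pm x_n>0\}}$ of class $C^2$, $\varphi^+_{x_n}(x_0)-\varphi^-_{x_n}(x_0)\ge0$;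 supersolution: touching from below, reversed inequalities. *)

theory Defs
  imports "HOL-Analysis.Analysis"
begin

type_synonym 'n mat = "real ^ 'n ^ 'n"

definition symm_mats :: "'n::finite mat set" where
  "symm_mats = {M. transpose M = M}"

definition psd :: "'n::finite mat \<Rightarrow> bool" where
  "psd N \<longleftrightarrow> (\<forall>x. 0 \<le> x \<bullet> (N *v x))"

definition mnorm :: "'n::finite mat \<Rightarrow> real" where
  "mnorm N = onorm (\<lambda>x. N *v x)"

definition ellipticClass :: "real \<Rightarrow> real \<Rightarrow> ('n::finite mat \<Rightarrow> real) set" where
  "ellipticClass lam Lam = {F. F 0 = 0 \<and>
     (\<forall>M\<in>symm_mats. \<forall>N\<in>symm_mats. psd N \<longrightarrow>
        lam * mnorm N \<le> F (M + N) - F M \<and> F (M + N) - F M \<le> Lam * mnorm N)}"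

definition C2_on :: "(real^'n::finite) set \<Rightarrow> (real^'n \<Rightarrow> real) \<Rightarrow> (real^'n \<Rightarrow> real^'n)
    \<Rightarrow> (real^'n \<Rightarrow> 'n mat) \<Rightarrow> bool" where
  "C2_on S v Dv D2v \<longleftrightarrow> open S \<and>
     (\<forall>x\<in>S. (v has_derivative (\<lambda>h. Dv x \<bullet> h)) (at x) \<and>
             (Dv has_derivative (\<lambda>h. D2v x *v h)) (at x)) \<and>
     continuous_on S D2v"

definition holder_quots :: "(real^'n::finite) set \<Rightarrow> real \<Rightarrow> (real^'n \<Rightarrow> 'n mat) \<Rightarrow> real set" where
  "holder_quots S a D2v =
     {norm (D2v x - D2v y) / (dist x y powr a) | x y. x \<in> S \<and> y \<in> S \<and> x \<noteq> y}"

text \<open>Membership in C^{2,a}(closure S) (S open), derivatives taken on S, and the norm.\<close>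
definition in_C2a :: "(real^'n::finite) set \<Rightarrow> real \<Rightarrow> (real^'n \<Rightarrow> real) \<Rightarrow> (real^'n \<Rightarrow> real^'n)
    \<Rightarrow> (real^'n \<Rightarrow> 'n mat) \<Rightarrow> bool" where
  "in_C2a S a v Dv D2v \<longleftrightarrow> C2_on S v Dv D2v \<and>
     bounded (v ` S) \<and> bounded (Dv ` S) \<and> bounded (D2v ` S) \<and>
     bdd_above (holder_quots S a D2v)"

definition C2a_norm :: "(real^'n::finite) set \<Rightarrow> real \<Rightarrow> (real^'n \<Rightarrow> real) \<Rightarrow> (real^'n \<Rightarrow> real^'n)
    \<Rightarrow> (real^'n \<Rightarrow> 'n mat) \<Rightarrow> real" where
  "C2a_norm S a v Dv D2v =
     (SUP x\<in>S. \<bar>v x\<bar>) + (SUP x\<in>S. norm (Dv x)) + (SUP x\<in>S. norm (D2v x))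
     + Sup (holder_quots S a D2v)"

definition sup_norm :: "(real^'n::finite) set \<Rightarrow> (real^'n \<Rightarrow> real) \<Rightarrow> real" where
  "sup_norm S v = (SUP x\<in>S. \<bar>v x\<bar>)"

definition touches_above :: "(real^'n::finite) set \<Rightarrow> (real^'n \<Rightarrow> real) \<Rightarrow> (real^'n \<Rightarrow> real) \<Rightarrow> real^'n \<Rightarrow> bool" where
  "touches_above Om phi v x0 \<longleftrightarrow> phi x0 = v x0 \<and>
     (\<exists>r>0. \<forall>x\<in>ball x0 r \<inter> Om. v x \<le> phi x)"

definition touches_below :: "(real^'n::finite) set \<Rightarrow> (real^'n \<Rightarrow> real) \<Rightarrow> (real^'n \<Rightarrow> real) \<Rightarrow> real^'n \<Rightarrow> bool" where
  "touches_below Om phi v x0 \<longleftrightarrow> phi x0 = v x0 \<and>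
     (\<exists>r>0. \<forall>x\<in>ball x0 r \<inter> Om. phi x \<le> v x)"

definition visc_sub_at :: "('n::finite mat \<Rightarrow> real) \<Rightarrow> (real^'n) set \<Rightarrow> (real^'n \<Rightarrow> real) \<Rightarrow> real^'n \<Rightarrow> bool" where
  "visc_sub_at F Om v x0 \<longleftrightarrow> (\<forall>phi Dphi D2phi U. x0 \<in> U \<and> C2_on U phi Dphi D2phi \<and>
      touches_above Om phi v x0 \<longrightarrow> F (D2phi x0) \<ge> 0)"

definition visc_super_at :: "('n::finite mat \<Rightarrow> real) \<Rightarrow> (real^'n) set \<Rightarrow> (real^'n \<Rightarrow> real) \<Rightarrow> real^'n \<Rightarrow> bool" where
  "visc_super_at F Om v x0 \<longleftrightarrow> (\<forall>phi Dphi D2phi U. x0 \<in> U \<and> C2_on U phi Dphi D2phi \<and>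
      touches_below Om phi v x0 \<longrightarrow> F (D2phi x0) \<le> 0)"

definition visc_solution :: "('n::finite mat \<Rightarrow> real) \<Rightarrow> (real^'n) set \<Rightarrow> (real^'n \<Rightarrow> real) \<Rightarrow> bool" where
  "visc_solution F Om w \<longleftrightarrow> continuous_on Om w \<and>
     (\<forall>x0\<in>Om. visc_sub_at F Om w x0 \<and> visc_super_at F Om w x0)"

text \<open>Half balls and flat interface, with the distinguished last coordinate k.\<close>
definition half_ball_pos :: "'n::finite \<Rightarrow> (real^'n) set" where
  "half_ball_pos k = {x \<in> ball 0 1. x $ k > 0}"
definition half_ball_neg :: "'n::finite \<Rightarrow> (real^'n) set" where
  "half_ball_neg k = {x \<in> ball 0 1. x $ k < 0}"
definition flat_T :: "'n::finite \<Rightarrow> (real^'n) set" where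
  "flat_T k = {x \<in> ball 0 1. x $ k = 0}"

text \<open>Piecewise C^2 test function at x0 in T: phi is continuous on a ball B_delta(x0) and its
  restrictions to the closed half balls are C^2 (i.e. agree there with C^2 functions phip, phim
  defined on a neighbourhood); the normal derivatives are the k-th gradient components.\<close>
definition pw_C2_test :: "'n::finite \<Rightarrow> real^'n \<Rightarrow> (real^'n \<Rightarrow> real) \<Rightarrow> real \<Rightarrow> real \<Rightarrow> bool" where
  "pw_C2_test k x0 phi dp dm \<longleftrightarrow> (\<exists>\<delta>>0. continuous_on (ball x0 \<delta>) phi \<and>
     (\<exists>phip Dp D2p phim Dm D2m.
        C2_on (ball x0 \<delta>) phip Dp D2p \<and> C2_on (ball x0 \<delta>) phim Dm D2m \<and>
        (\<forall>x\<in>cball x0 \<delta>. x $ k \<ge> 0 \<longrightarrow> phi x = phip x) \<and>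
        (\<forall>x\<in>cball x0 \<delta>. x $ k \<le> 0 \<longrightarrow> phi x = phim x) \<and>
        dp = Dp x0 $ k \<and> dm = Dm x0 $ k))"

text \<open>Viscosity solution of the flat transmission problem
  F(D^2 v) = 0 in B_1^+ and B_1^-, v^+_{x_n} - v^-_{x_n} = 0 on T.\<close>
definition flat_visc_solution :: "('n::finite mat \<Rightarrow> real) \<Rightarrow> 'n \<Rightarrow> (real^'n \<Rightarrow> real) \<Rightarrow> bool" where
  "flat_visc_solution F k v \<longleftrightarrow> continuous_on (ball 0 1) v \<and>
     (\<forall>x0 \<in> half_ball_pos k \<union> half_ball_neg k.
        visc_sub_at F (ball 0 1) v x0 \<and> visc_super_at F (ball 0 1) v x0) \<and>
     (\<forall>x0 \<in> flat_T k. \<forall>phi dp dm. pw_C2_test k x0 phi dp dm \<longrightarrow>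
        (touches_above (ball 0 1) phi v x0 \<longrightarrow> dp - dm \<ge> 0) \<and>
        (touches_below (ball 0 1) phi v x0 \<longrightarrow> dp - dm \<le> 0))"

definition univ_C2a_exponent :: "'n::finite itself \<Rightarrow> real \<Rightarrow> real \<Rightarrow> real \<Rightarrow> bool" where
  "univ_C2a_exponent TYPE('n) lam Lam a \<longleftrightarrow> 0 < a \<and> a < 1 \<and>
     (\<exists>C>0. \<forall>(F::'n mat \<Rightarrow> real) w. F \<in> ellipticClass lam Lam \<and> concave_on symm_mats F \<and>
        visc_solution F (ball 0 1) w \<and> bounded (w ` ball 0 1) \<longrightarrow>
        (\<exists>Dw D2w. in_C2a (ball 0 (1/2)) a w Dw D2w \<and>
           C2a_norm (ball 0 (1/2)) a w Dw D2w \<le> C * sup_norm (ball 0 1) w))"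

end

theory Submission
  imports Defs
begin


lemma second_diff_bound:
  fixes f :: "real^'n::finite \<Rightarrow> real"
  assumes df: "\<And>y. y \<in> ball x r \<Longrightarrow> (f has_derivative (\<lambda>h. Df y \<bullet> h)) (at y)"
    and dd: "\<And>y. norm (y - x) < \<delta> \<Longrightarrow> norm (Df y - Df x - A *v (y - x)) \<le> eps * norm (y - x)"
    and e: "0 \<le> eps"
    and s: "0 < s" "s * (norm h + norm k) < \<delta>" "s * (norm h + norm k) < r"
  shows "\<bar>f (x + s*\<^sub>R h + s*\<^sub>R k) - f (x + s*\<^sub>R h) - f (x + s*\<^sub>R k) + f x - s^2 * ((A *v k) \<bullet> h)\<bar>
          \<le> 2 * eps * s ^ 2 * (norm h + norm k) * norm h"
proof -
  define c where "c = s * ((A *v k) \<bullet> h)"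
  define g where "g u = f (x + u*\<^sub>R h + s*\<^sub>R k) - f (x + u*\<^sub>R h) - u * c" for u
  define g' where "g' u = (Df (x + u*\<^sub>R h + s*\<^sub>R k) - Df (x + u*\<^sub>R h)) \<bullet> h - c" for u
  define B where "B = 2 * eps * s * (norm h + norm k) * norm h"
  have pts: "norm ((x + u*\<^sub>R h + s*\<^sub>R k) - x) \<le> s * (norm h + norm k)"
      "norm ((x + u*\<^sub>R h) - x) \<le> s * (norm h + norm k)" if "u \<in> {0..s}" for u
  proof -
    have "norm ((x + u*\<^sub>R h + s*\<^sub>R k) - x) \<le> norm (u *\<^sub>R h) + norm (s *\<^sub>R k)"
      using norm_triangle_ineq[of "u*\<^sub>R h" "s*\<^sub>R k"] by (simp add: add.assoc)
    also have "\<dots> = u * norm h + s * norm k" using that s by auto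
    also have "\<dots> \<le> s * (norm h + norm k)" using that
      by (simp add: distrib_left mult_right_mono)
    finally show "norm ((x + u*\<^sub>R h + s*\<^sub>R k) - x) \<le> s * (norm h + norm k)" .
    have "norm ((x + u*\<^sub>R h) - x) = u * norm h" using that by auto
    also have "\<dots> \<le> s * (norm h + norm k)" using that
      by (simp add: distrib_left mult_right_mono add_increasing2)
    finally show "norm ((x + u*\<^sub>R h) - x) \<le> s * (norm h + norm k)" .
  qed
  have inball: "x + u*\<^sub>R h + s*\<^sub>R k \<in> ball x r" "x + u*\<^sub>R h \<in> ball x r" if "u \<in> {0..s}" for u
    using pts[OF that] s by (auto simp: dist_norm norm_minus_commute add.commute)
  have deriv: "(g has_derivative (\<lambda>d. d * g' u)) (at u within {0..s})" if u: "u \<in> {0..s}" for u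
  proof -
    have 1: "((\<lambda>u. x + u*\<^sub>R h + s*\<^sub>R k) has_derivative (\<lambda>d. d *\<^sub>R h)) (at u within {0..s})"
      by (auto intro!: derivative_eq_intros)
    have 2: "((\<lambda>u. x + u*\<^sub>R h) has_derivative (\<lambda>d. d *\<^sub>R h)) (at u within {0..s})"
      by (auto intro!: derivative_eq_intros)
    have 3: "((\<lambda>u. u * c) has_derivative (\<lambda>d. d * c)) (at u within {0..s})"
      by (auto intro!: derivative_eq_intros)
    have a: "((\<lambda>u. f (x + u*\<^sub>R h + s*\<^sub>R k)) has_derivative (\<lambda>d. Df (x + u*\<^sub>R h + s*\<^sub>R k) \<bullet> (d *\<^sub>R h))) (at u within {0..s})"
      using has_derivative_compose[OF 1 df[OF inball(1)[OF u]]] .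
    have b: "((\<lambda>u. f (x + u*\<^sub>R h)) has_derivative (\<lambda>d. Df (x + u*\<^sub>R h) \<bullet> (d *\<^sub>R h))) (at u within {0..s})"
      using has_derivative_compose[OF 2 df[OF inball(2)[OF u]]] .
    have "(g has_derivative (\<lambda>d. Df (x + u*\<^sub>R h + s*\<^sub>R k) \<bullet> (d *\<^sub>R h) - Df (x + u*\<^sub>R h) \<bullet> (d *\<^sub>R h) - d * c)) (at u within {0..s})"
      unfolding g_def by (intro has_derivative_diff a b 3)
    then show ?thesis
      by (rule has_derivative_eq_rhs) (auto simp: g'_def algebra_simps fun_eq_iff)
  qed
  have gb: "\<bar>g' u\<bar> \<le> B" if u: "u \<in> {0..s}" for u
  proof -
    define y1 where "y1 = x + u*\<^sub>R h + s*\<^sub>R k"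
    define y2 where "y2 = x + u*\<^sub>R h"
    have eqc: "c = (A *v (y1 - x) - A *v (y2 - x)) \<bullet> h"
    proof -
      have e1: "(y1 - x) - (y2 - x) = s *\<^sub>R k" by (simp add: y1_def y2_def)
      have "A *v (y1 - x) - A *v (y2 - x) = A *v ((y1 - x) - (y2 - x))"
        by (simp add: matrix_vector_mult_diff_distrib)
      also have "\<dots> = s *\<^sub>R (A *v k)" unfolding e1 by (simp add: matrix_vector_mult_scaleR)
      finally have "A *v (y1 - x) - A *v (y2 - x) = s *\<^sub>R (A *v k)" .
      then show ?thesis by (simp add: c_def)
    qed
    have "g' u = ((Df y1 - Df x - A *v (y1 - x)) - (Df y2 - Df x - A *v (y2 - x))) \<bullet> h"
      unfolding g'_def eqc by (simp add: y1_def y2_def algebra_simps)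
    then have "\<bar>g' u\<bar> \<le> norm ((Df y1 - Df x - A *v (y1 - x)) - (Df y2 - Df x - A *v (y2 - x))) * norm h"
      by (simp add: Cauchy_Schwarz_ineq2)
    also have "\<dots> \<le> (norm (Df y1 - Df x - A *v (y1 - x)) + norm (Df y2 - Df x - A *v (y2 - x))) * norm h"
      by (intro mult_right_mono norm_triangle_ineq4) auto
    also have "\<dots> \<le> (eps * (s * (norm h + norm k)) + eps * (s * (norm h + norm k))) * norm h"
    proof -
      have p1: "norm (y1 - x) \<le> s * (norm h + norm k)" "norm (y2 - x) \<le> s * (norm h + norm k)"
        using pts[OF u] by (auto simp: y1_def y2_def)
      have "norm (Df y1 - Df x - A *v (y1 - x)) \<le> eps * norm (y1 - x)"
        using dd p1 s by force
      also have "\<dots> \<le> eps * (s * (norm h + norm k))" using p1 e by (intro mult_left_mono) auto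
      finally have q1: "norm (Df y1 - Df x - A *v (y1 - x)) \<le> eps * (s * (norm h + norm k))" .
      have "norm (Df y2 - Df x - A *v (y2 - x)) \<le> eps * norm (y2 - x)"
        using dd p1 s by force
      also have "\<dots> \<le> eps * (s * (norm h + norm k))" using p1 e by (intro mult_left_mono) auto
      finally have q2: "norm (Df y2 - Df x - A *v (y2 - x)) \<le> eps * (s * (norm h + norm k))" .
      show ?thesis using q1 q2 by (intro mult_right_mono) auto
    qed
    also have "\<dots> = B" by (simp add: B_def algebra_simps)
    finally show ?thesis .
  qed
  have onb: "onorm (\<lambda>d. d * g' u) \<le> B" if "u \<in> {0..s}" for u
    by (rule onorm_le) (use gb[OF that] in \<open>auto simp: abs_mult mult.commute[of B] intro: mult_left_mono\<close>)
  have "norm (g s - g 0) \<le> B * norm (s - 0)"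
    by (rule differentiable_bound[of "{0..s}" g "\<lambda>u d. d * g' u"]) (use deriv onb s in auto)
  moreover have "g s - g 0 = f (x + s*\<^sub>R h + s*\<^sub>R k) - f (x + s*\<^sub>R h) - f (x + s*\<^sub>R k) + f x - s^2 * ((A *v k) \<bullet> h)"
    by (simp add: g_def c_def power2_eq_square)
  ultimately show ?thesis using s by (simp add: B_def power2_eq_square mult_ac)
qed

lemma matrix_axis_entry:
  fixes A :: "real^'n::finite^'n"
  shows "(A *v axis j 1) \<bullet> axis i 1 = A $ i $ j"
proof -
  have "(A *v axis j 1) \<bullet> axis i 1 = (A *v axis j 1) $ i" by (simp add: cart_eq_inner_axis)
  also have "\<dots> = A $ i $ j" by (simp add: matrix_vector_mult_def axis_def if_distrib cong: if_cong)
  finally show ?thesis .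
qed

lemma hessian_symmetric:
  fixes f :: "real^'n::finite \<Rightarrow> real"
  assumes r: "0 < r" and df: "\<And>y. y \<in> ball x r \<Longrightarrow> (f has_derivative (\<lambda>h. Df y \<bullet> h)) (at y)"
    and d2: "(Df has_derivative (\<lambda>h. A *v h)) (at x)"
  shows "transpose A = A"
proof -
  have key: "(A *v k) \<bullet> h = (A *v h) \<bullet> k" for h k
  proof -
    define C where "C = 2 * (norm h + norm k)^2"
    have C0: "0 \<le> C" by (simp add: C_def)
    have bnd: "\<bar>(A *v k) \<bullet> h - (A *v h) \<bullet> k\<bar> \<le> e * C" if e: "e > 0" for e
    proof -
      from d2[unfolded has_derivative_at_alt] e obtain \<delta> where d0: "\<delta> > 0"
        and dd: "\<And>y. norm (y - x) < \<delta> \<Longrightarrow> norm (Df y - Df x - A *v (y - x)) \<le> e * norm (y - x)"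
        by blast
      define s where "s = min \<delta> r / (2 * (norm h + norm k + 1))"
      have P: "2 * (norm h + norm k + 1) > 0" by (simp add: add_nonneg_pos)
      then have s0: "s > 0" using d0 r unfolding s_def by (intro divide_pos_pos) auto
      have "s * (norm h + norm k) < min \<delta> r"
      proof -
        have "s * (norm h + norm k) \<le> s * (norm h + norm k + 1)" using s0 by simp
        also have "\<dots> = min \<delta> r / 2" unfolding s_def
          using P by (simp add: field_simps)
        also have "\<dots> < min \<delta> r" using d0 r by (simp add: min_def)
        finally show ?thesis .
      qed
      then have sd: "s * (norm h + norm k) < \<delta>" "s * (norm h + norm k) < r" by auto
      have sd': "s * (norm k + norm h) < \<delta>" "s * (norm k + norm h) < r" using sd by (auto simp: add.commute)
      have b1: "\<bar>f (x + s*\<^sub>R h + s*\<^sub>R k) - f (x + s*\<^sub>R h) - f (x + s*\<^sub>R k) + f x - s^2 * ((A *v k) \<bullet> h)\<bar>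
          \<le> 2 * e * s ^ 2 * (norm h + norm k) * norm h"
        by (rule second_diff_bound[where r=r and \<delta>=\<delta>, OF df dd]) (use e s0 sd in auto)
      have b2: "\<bar>f (x + s*\<^sub>R k + s*\<^sub>R h) - f (x + s*\<^sub>R k) - f (x + s*\<^sub>R h) + f x - s^2 * ((A *v h) \<bullet> k)\<bar>
          \<le> 2 * e * s ^ 2 * (norm k + norm h) * norm k"
        by (rule second_diff_bound[where r=r and \<delta>=\<delta>, OF df dd]) (use e s0 sd' in auto)
      have comm: "x + s*\<^sub>R k + s*\<^sub>R h = x + s*\<^sub>R h + s*\<^sub>R k" by (simp add: algebra_simps)
      have "s^2 * \<bar>(A *v k) \<bullet> h - (A *v h) \<bullet> k\<bar> = \<bar>s^2 * ((A *v k) \<bullet> h) - s^2 * ((A *v h) \<bullet> k)\<bar>"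
        by (metis abs_mult abs_power2 power2_abs right_diff_distrib)
      also have "\<dots> \<le> 2 * e * s ^ 2 * (norm h + norm k) * norm h + 2 * e * s ^ 2 * (norm k + norm h) * norm k"
        using b1 b2 unfolding comm by linarith
      also have "\<dots> = s^2 * (e * C)" by (simp add: C_def power2_eq_square algebra_simps)
      finally show ?thesis using s0 by simp
    qed
    show ?thesis
    proof (rule ccontr)
      assume ne: "(A *v k) \<bullet> h \<noteq> (A *v h) \<bullet> k"
      define d where "d = \<bar>(A *v k) \<bullet> h - (A *v h) \<bullet> k\<bar>"
      have d0: "d > 0" using ne by (simp add: d_def)
      have "d \<le> (d / (2 * (C + 1))) * C" using bnd[of "d / (2 * (C + 1))"] d0 C0 by (simp add: d_def)
      also have "\<dots> = d * (C / (2 * (C + 1)))" by simp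
      also have "\<dots> < d * 1"
        using d0 C0 by (intro mult_strict_left_mono) (auto simp: field_simps)
      finally show False by simp
    qed
  qed
  show ?thesis
    unfolding vec_eq_iff
  proof (intro allI)
    fix i j
    show "transpose A $ i $ j = A $ i $ j"
      using key[of "axis i 1" "axis j 1"] by (simp add: transpose_def matrix_axis_entry)
  qed
qed

lemma C2_symm:
  assumes "C2_on S f Df D2f" "x \<in> S"
  shows "D2f x \<in> symm_mats"
proof -
  from assms have "open S" by (simp add: C2_on_def)
  then obtain r where r: "r > 0" "ball x r \<subseteq> S" using assms(2) openE by blast
  show ?thesis unfolding symm_mats_def
    by (rule CollectI, rule hessian_symmetric[OF r(1), where f=f and Df=Df])
       (use assms r in \<open>auto simp: C2_on_def\<close>)
qed

lemma transpose_add': "transpose (A + B) = transpose A + transpose (B::'n::finite mat)"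
  by (simp add: transpose_def vec_eq_iff)
lemma transpose_diff': "transpose (A - B) = transpose A - transpose (B::'n::finite mat)"
  by (simp add: transpose_def vec_eq_iff)

lemma symm_add: "A \<in> symm_mats \<Longrightarrow> B \<in> symm_mats \<Longrightarrow> A + B \<in> symm_mats"
  by (simp add: symm_mats_def transpose_add')
lemma symm_diff: "A \<in> symm_mats \<Longrightarrow> B \<in> symm_mats \<Longrightarrow> A - B \<in> symm_mats"
  by (simp add: symm_mats_def transpose_diff')
lemma symm_mat: "mat c \<in> symm_mats"
  by (simp add: symm_mats_def)

lemma mat_scale1: "mat c = c *\<^sub>R (mat 1 :: real^'n::finite^'n)"
  by (simp add: vec_eq_iff mat_def)
lemma mat_mult_vec: "mat c *v (x::real^'n::finite) = c *\<^sub>R x"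
  by (subst mat_scale1) (simp add: scaleR_matrix_vector_assoc[symmetric])

lemma mnorm_mat: "0 \<le> c \<Longrightarrow> mnorm (mat c :: 'n::finite mat) \<le> c"
  unfolding mnorm_def by (rule onorm_le) (simp add: mat_mult_vec)

lemma mnorm_nonneg: "0 \<le> mnorm (A :: 'n::finite mat)"
  unfolding mnorm_def by (rule onorm_pos_le) simp

lemma onorm_mat_le_norm: "onorm ((*v) (A :: 'n::finite mat)) \<le> real CARD('n) * real CARD('n) * norm A"
proof (rule onorm_le_matrix_component)
  fix i j
  have "\<bar>A $ i $ j\<bar> \<le> norm (A $ i)" by (rule component_le_norm_cart)
  also have "\<dots> \<le> norm A" by (rule Finite_Cartesian_Product.norm_nth_le)
  finally show "\<bar>A $ i $ j\<bar> \<le> norm A" .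
qed

lemma psd_close:
  fixes B :: "'n::finite mat"
  assumes "onorm ((*v) B) \<le> c"
  shows "psd (B + mat c)"
  unfolding psd_def
proof
  fix x :: "real^'n"
  have "\<bar>x \<bullet> (B *v x)\<bar> \<le> norm x * norm (B *v x)" by (rule Cauchy_Schwarz_ineq2)
  also have "\<dots> \<le> norm x * (onorm ((*v) B) * norm x)"
    by (intro mult_left_mono onorm) auto
  also have "\<dots> \<le> norm x * (c * norm x)"
    by (intro mult_left_mono mult_right_mono assms) auto
  finally have "\<bar>x \<bullet> (B *v x)\<bar> \<le> c * (x \<bullet> x)"
    by (simp add: power2_norm_eq_inner[symmetric] power2_eq_square mult_ac)
  then show "0 \<le> x \<bullet> ((B + mat c) *v x)"
    by (simp add: matrix_vector_mult_add_rdistrib mat_mult_vec inner_add_right)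
qed

lemma C2_on_subset: "C2_on S f Df D2f \<Longrightarrow> open T \<Longrightarrow> T \<subseteq> S \<Longrightarrow> C2_on T f Df D2f"
  unfolding C2_on_def by (auto intro: continuous_on_subset)

lemma C2_quad:
  fixes k :: "'n::finite"
  assumes "C2_on U phi Dphi D2phi"
  shows "C2_on U (\<lambda>x. phi x + \<eta> * ((x - x0) \<bullet> (x - x0)) + c * x $ k + m)
                 (\<lambda>x. Dphi x + (2 * \<eta>) *\<^sub>R (x - x0) + c *\<^sub>R axis k 1)
                 (\<lambda>x. D2phi x + mat (2 * \<eta>))"
  unfolding C2_on_def
proof (intro conjI ballI)
  show "open U" using assms by (simp add: C2_on_def)
  show "continuous_on U (\<lambda>x. D2phi x + mat (2 * \<eta>))"
    using assms by (auto simp: C2_on_def intro!: continuous_intros)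
  fix x assume x: "x \<in> U"
  have d1: "(phi has_derivative (\<lambda>h. Dphi x \<bullet> h)) (at x)" and
       d2: "(Dphi has_derivative (\<lambda>h. D2phi x *v h)) (at x)"
    using assms x by (auto simp: C2_on_def)
  have dk: "((\<lambda>x. x $ k) has_derivative (\<lambda>h. h $ k)) (at x)"
    by (rule bounded_linear_imp_has_derivative) (rule bounded_linear_vec_nth)
  show "((\<lambda>x. phi x + \<eta> * ((x - x0) \<bullet> (x - x0)) + c * x $ k + m) has_derivative
          (\<lambda>h. (Dphi x + (2 * \<eta>) *\<^sub>R (x - x0) + c *\<^sub>R axis k 1) \<bullet> h)) (at x)"
  proof -
    have dq: "((\<lambda>x. (x - x0) \<bullet> (x - x0)) has_derivative (\<lambda>h. (x - x0) \<bullet> h + h \<bullet> (x - x0))) (at x)"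
      by (rule has_derivative_eq_rhs, rule has_derivative_inner[OF has_derivative_diff[OF has_derivative_ident has_derivative_const] has_derivative_diff[OF has_derivative_ident has_derivative_const]]) auto
    have "((\<lambda>x. phi x + \<eta> * ((x - x0) \<bullet> (x - x0)) + c * x $ k + m) has_derivative
          (\<lambda>h. Dphi x \<bullet> h + \<eta> * ((x - x0) \<bullet> h + h \<bullet> (x - x0)) + c * h $ k + 0)) (at x)"
      by (intro has_derivative_add d1 has_derivative_mult_right dq dk has_derivative_const)
    then show ?thesis
      by (rule has_derivative_eq_rhs)
         (auto simp: fun_eq_iff inner_add_left inner_commute cart_eq_inner_axis algebra_simps)
  qed
  show "((\<lambda>x. Dphi x + (2 * \<eta>) *\<^sub>R (x - x0) + c *\<^sub>R axis k 1) has_derivative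
          (\<lambda>h. (D2phi x + mat (2 * \<eta>)) *v h)) (at x)"
    by (rule has_derivative_eq_rhs, (intro derivative_eq_intros d2)+)
       (use d2 in \<open>auto simp: fun_eq_iff matrix_vector_mult_add_rdistrib mat_mult_vec\<close>)
qed

lemma F_strict:
  fixes F :: "'n::finite mat \<Rightarrow> real"
  assumes F: "F \<in> ellipticClass lam Lam" and l: "0 \<le> lam" and L: "0 \<le> Lam"
    and A: "A \<in> symm_mats" "Z \<in> symm_mats"
    and close: "onorm ((*v) (A - Z)) \<le> \<eta>" and e: "0 \<le> \<eta>"
  shows "F (Z + mat (2*\<eta>)) \<le> F A + Lam * (3*\<eta>)"
proof -
  have ell: "\<And>M N. M \<in> symm_mats \<Longrightarrow> N \<in> symm_mats \<Longrightarrow> psd N \<Longrightarrow>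
      lam * mnorm N \<le> F (M + N) - F M \<and> F (M + N) - F M \<le> Lam * mnorm N"
    using F by (simp add: ellipticClass_def)
  define M where "M = Z + mat (2*\<eta>)"
  define N where "N = (A - Z) + mat \<eta>"
  have MS: "M \<in> symm_mats" unfolding M_def by (intro symm_add A symm_mat)
  have NS: "N \<in> symm_mats" unfolding N_def by (intro symm_add symm_diff A symm_mat)
  have Np: "psd N" unfolding N_def by (rule psd_close[OF close])
  have MN: "M + N = A + mat (3*\<eta>)"
    by (simp add: M_def N_def vec_eq_iff mat_def)
  have "lam * mnorm N \<ge> 0" using l mnorm_nonneg[of N] by simp
  then have 1: "F M \<le> F (A + mat (3*\<eta>))" using ell[OF MS NS Np] MN by simp
  have m3: "psd (mat (3*\<eta>))" unfolding psd_def using e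
    by (simp add: mat_mult_vec)
  have "F (A + mat (3*\<eta>)) - F A \<le> Lam * mnorm (mat (3*\<eta>) :: 'n mat)"
    using ell[OF A(1) symm_mat m3] by simp
  also have "\<dots> \<le> Lam * (3*\<eta>)"
    using mnorm_mat[of "3*\<eta>"] e L by (intro mult_left_mono) auto
  finally show ?thesis using 1 unfolding M_def by simp
qed

lemma sub_on_T:
  fixes F :: "'n::finite mat \<Rightarrow> real" and k :: 'n
  assumes F: "F \<in> ellipticClass lam Lam" and lam: "0 < lam" "lam \<le> Lam"
    and sol: "flat_visc_solution F k v" and x0: "x0 \<in> flat_T k"
  shows "visc_sub_at F (ball 0 1) v x0"
  unfolding visc_sub_at_def
proof (intro allI impI, elim conjE)
  fix phi Dphi D2phi U
  assume x0U: "x0 \<in> U" and C2: "C2_on U phi Dphi D2phi"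
    and tch: "touches_above (ball 0 1) phi v x0"
  show "0 \<le> F (D2phi x0)"
  proof (rule ccontr)
    assume "\<not> 0 \<le> F (D2phi x0)"
    then have F0: "F (D2phi x0) < 0" by simp
    have Lam0: "Lam > 0" using lam by simp
    define \<eta> where "\<eta> = - F (D2phi x0) / (6 * Lam)"
    have \<eta>0: "\<eta> > 0" using F0 Lam0 unfolding \<eta>_def by (intro divide_pos_pos) auto
    have x0b: "x0 \<in> ball 0 1" "x0 $ k = 0" using x0 by (auto simp: flat_T_def)
    have openU: "open U" using C2 by (simp add: C2_on_def)
    have contD2: "continuous_on U D2phi" using C2 by (simp add: C2_on_def)
    define K where "K = real CARD('n) * real CARD('n)"
    have K0: "K > 0" by (simp add: K_def)
    obtain d1 where d1: "d1 > 0" "\<And>y. y \<in> U \<Longrightarrow> dist y x0 < d1 \<Longrightarrow> dist (D2phi y) (D2phi x0) < \<eta> / K"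
      using contD2 x0U \<eta>0 K0 unfolding continuous_on_iff
      by (metis divide_pos_pos)
    obtain r2 where r2: "r2 > 0" "ball x0 r2 \<subseteq> U" using openU x0U openE by blast
    obtain r3 where r3: "r3 > 0" "ball x0 r3 \<subseteq> ball 0 1" using x0b(1) openE open_ball by blast
    obtain r0 where r0: "r0 > 0" "\<And>x. x \<in> ball x0 r0 \<inter> ball 0 1 \<Longrightarrow> v x \<le> phi x"
      and phix0: "phi x0 = v x0"
      using tch unfolding touches_above_def by blast
    define r where "r = min (min r0 d1) (min r2 r3) / 2"
    have r0': "r > 0" using r0 d1 r2 r3 by (simp add: r_def)
    have rl: "r < r0" "r < d1" "r < r2" "r < r3" using r0 d1 r2 r3 by (auto simp: r_def min_def)
    have cbU: "cball x0 r \<subseteq> U" using rl r2 by (auto simp: subset_eq)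
    have cbB: "cball x0 r \<subseteq> ball 0 1" using rl r3 by (auto simp: subset_eq)
    have cb0: "cball x0 r \<subseteq> ball x0 r0" using rl by (auto simp: subset_eq)
    define t where "t = \<eta> * r / 2"
    have t0: "t > 0" using \<eta>0 r0' by (simp add: t_def)
    define \<psi> where "\<psi> x = phi x + \<eta> * ((x - x0) \<bullet> (x - x0)) - t * \<bar>x $ k\<bar>" for x
    have contphi: "continuous_on U phi"
      using C2 unfolding C2_on_def
      by (meson continuous_at_imp_continuous_on has_derivative_continuous)
    have contv: "continuous_on (ball 0 1) v" using sol by (simp add: flat_visc_solution_def)
    have contpsi: "continuous_on S \<psi>" if "S \<subseteq> U" for S
      unfolding \<psi>_def using continuous_on_subset[OF contphi that]
      by (intro continuous_intros) auto
    have contdiff: "continuous_on (cball x0 r) (\<lambda>x. v x - \<psi> x)"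
      using continuous_on_subset[OF contv cbB] contpsi[OF cbU] by (intro continuous_intros)
    obtain z where z: "z \<in> cball x0 r" and zmax: "\<And>x. x \<in> cball x0 r \<Longrightarrow> v x - \<psi> x \<le> v z - \<psi> z"
      proof -
      have "cball x0 r \<noteq> {}" using r0' by (simp add: cball_eq_empty)
      then show ?thesis using continuous_attains_sup[OF compact_cball _ contdiff] that by blast
    qed
    define m where "m = v z - \<psi> z"
    have "v x0 - \<psi> x0 = 0" using phix0 x0b by (simp add: \<psi>_def)
    then have m0: "m \<ge> 0" using zmax[of x0] r0' by (simp add: m_def)
    have zin: "z \<in> ball x0 r"
    proof (rule ccontr)
      assume "z \<notin> ball x0 r"
      then have dz: "dist x0 z = r" using z by simp
      have "z \<in> ball x0 r0 \<inter> ball 0 1" using z cb0 cbB by blast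
      then have "v z \<le> phi z" using r0(2) by blast
      moreover have "(z - x0) \<bullet> (z - x0) = r^2"
        using dz by (simp add: power2_norm_eq_inner[symmetric] dist_norm norm_minus_commute)
      moreover have "\<bar>z $ k\<bar> \<le> r"
      proof -
        have "\<bar>z $ k\<bar> = \<bar>(z - x0) $ k\<bar>" using x0b by simp
        also have "\<dots> \<le> norm (z - x0)" by (rule component_le_norm_cart)
        finally show ?thesis using dz by (simp add: dist_norm norm_minus_commute)
      qed
      moreover have "t * \<bar>z $ k\<bar> \<le> t * r" using calculation(3) t0 by (intro mult_left_mono) auto
      ultimately have "v z - \<psi> z \<le> - \<eta> * r^2 + t * r"
        unfolding \<psi>_def by simp
      also have "\<dots> < 0" using \<eta>0 r0' by (simp add: t_def power2_eq_square)
      finally show False using m0 m_def by simp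
    qed
    define \<rho> where "\<rho> = r - dist x0 z"
    have \<rho>0: "\<rho> > 0" using zin by (simp add: \<rho>_def)
    have bz: "ball z \<rho> \<subseteq> ball x0 r"
      unfolding \<rho>_def by (auto simp: subset_eq) (smt (verit) dist_triangle)
    have above: "v x \<le> \<psi> x + m" if "x \<in> ball z \<rho>" for x
      using zmax[of x] bz that by (auto simp: m_def)
    have zU: "z \<in> U" and zB: "z \<in> ball 0 1" using zin cbU cbB ball_subset_cball by blast+
    define \<psi>p where "\<psi>p x = phi x + \<eta> * ((x - x0) \<bullet> (x - x0)) + (-t) * x $ k + m" for x
    define \<psi>m where "\<psi>m x = phi x + \<eta> * ((x - x0) \<bullet> (x - x0)) + t * x $ k + m" for x
    have C2p: "C2_on U \<psi>p (\<lambda>x. Dphi x + (2 * \<eta>) *\<^sub>R (x - x0) + (-t) *\<^sub>R axis k 1) (\<lambda>x. D2phi x + mat (2 * \<eta>))"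
      unfolding \<psi>p_def by (rule C2_quad[OF C2])
    have C2m: "C2_on U \<psi>m (\<lambda>x. Dphi x + (2 * \<eta>) *\<^sub>R (x - x0) + t *\<^sub>R axis k 1) (\<lambda>x. D2phi x + mat (2 * \<eta>))"
      unfolding \<psi>m_def by (rule C2_quad[OF C2])
    have lep: "\<psi> x + m \<le> \<psi>p x" and lem: "\<psi> x + m \<le> \<psi>m x" for x
    proof -
      have "- t * \<bar>x $ k\<bar> \<le> (-t) * x $ k" "- t * \<bar>x $ k\<bar> \<le> t * x $ k" using t0
        by (auto simp: abs_if)
      then show "\<psi> x + m \<le> \<psi>p x" "\<psi> x + m \<le> \<psi>m x" by (auto simp: \<psi>_def \<psi>p_def \<psi>m_def)
    qed
    have key: "F (D2phi z + mat (2 * \<eta>)) < 0"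
    proof -
      have "dist z x0 < d1" using zin rl by (simp add: dist_commute)
      then have "norm (D2phi x0 - D2phi z) < \<eta> / K" using d1(2)[OF zU] by (simp add: dist_norm norm_minus_commute)
      then have "onorm ((*v) (D2phi x0 - D2phi z)) \<le> \<eta>"
        using onorm_mat_le_norm[of "D2phi x0 - D2phi z"] K0
        by (simp add: K_def[symmetric] field_simps)
      then have "F (D2phi z + mat (2 * \<eta>)) \<le> F (D2phi x0) + Lam * (3 * \<eta>)"
        using F_strict[OF F _ _ C2_symm[OF C2 x0U] C2_symm[OF C2 zU]] lam \<eta>0 by simp
      also have "\<dots> < 0" using F0 Lam0 by (simp add: \<eta>_def)
      finally show ?thesis .
    qed
    consider "z $ k > 0" | "z $ k < 0" | "z $ k = 0" by linarith
    then show False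
    proof cases
      case 1
      then have "z \<in> half_ball_pos k" using zB by (simp add: half_ball_pos_def)
      then have "visc_sub_at F (ball 0 1) v z" using sol by (simp add: flat_visc_solution_def)
      moreover have "touches_above (ball 0 1) \<psi>p v z"
        unfolding touches_above_def
      proof
        show "\<psi>p z = v z" using 1 by (simp add: \<psi>p_def \<psi>_def m_def)
        show "\<exists>r>0. \<forall>x\<in>ball z r \<inter> ball 0 1. v x \<le> \<psi>p x"
          using \<rho>0 above lep by (meson IntD1 order_trans)
      qed
      ultimately have "F (D2phi z + mat (2 * \<eta>)) \<ge> 0"
        using zU C2p unfolding visc_sub_at_def by blast
      then show False using key by simp
    next
      case 2
      then have "z \<in> half_ball_neg k" using zB by (simp add: half_ball_neg_def)
      then have "visc_sub_at F (ball 0 1) v z" using sol by (simp add: flat_visc_solution_def)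
      moreover have "touches_above (ball 0 1) \<psi>m v z"
        unfolding touches_above_def
      proof
        show "\<psi>m z = v z" using 2 by (simp add: \<psi>m_def \<psi>_def m_def)
        show "\<exists>r>0. \<forall>x\<in>ball z r \<inter> ball 0 1. v x \<le> \<psi>m x"
          using \<rho>0 above lem by (meson IntD1 order_trans)
      qed
      ultimately have "F (D2phi z + mat (2 * \<eta>)) \<ge> 0"
        using zU C2m unfolding visc_sub_at_def by blast
      then show False using key by simp
    next
      case 3
      then have zT: "z \<in> flat_T k" using zB by (simp add: flat_T_def)
      define dp where "dp = (Dphi z + (2 * \<eta>) *\<^sub>R (z - x0) + (-t) *\<^sub>R axis k 1) $ k"
      define dm where "dm = (Dphi z + (2 * \<eta>) *\<^sub>R (z - x0) + t *\<^sub>R axis k 1) $ k"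
      have bU: "ball z \<rho> \<subseteq> U" using bz cbU ball_subset_cball by blast
      have pw: "pw_C2_test k z (\<lambda>x. \<psi> x + m) dp dm"
        unfolding pw_C2_test_def
      proof (intro exI conjI)
        show "\<rho> > 0" by (rule \<rho>0)
        show "continuous_on (ball z \<rho>) (\<lambda>x. \<psi> x + m)"
          using contpsi[OF bU] by (intro continuous_intros)
        show "C2_on (ball z \<rho>) \<psi>p (\<lambda>x. Dphi x + (2 * \<eta>) *\<^sub>R (x - x0) + (-t) *\<^sub>R axis k 1) (\<lambda>x. D2phi x + mat (2 * \<eta>))"
          by (rule C2_on_subset[OF C2p open_ball bU])
        show "C2_on (ball z \<rho>) \<psi>m (\<lambda>x. Dphi x + (2 * \<eta>) *\<^sub>R (x - x0) + t *\<^sub>R axis k 1) (\<lambda>x. D2phi x + mat (2 * \<eta>))"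
          by (rule C2_on_subset[OF C2m open_ball bU])
        show "\<forall>x\<in>cball z \<rho>. 0 \<le> x $ k \<longrightarrow> \<psi> x + m = \<psi>p x"
          by (auto simp: \<psi>_def \<psi>p_def)
        show "\<forall>x\<in>cball z \<rho>. x $ k \<le> 0 \<longrightarrow> \<psi> x + m = \<psi>m x"
          by (auto simp: \<psi>_def \<psi>m_def)
      qed (simp_all add: dp_def dm_def)
      have "touches_above (ball 0 1) (\<lambda>x. \<psi> x + m) v z"
        unfolding touches_above_def
      proof
        show "\<psi> z + m = v z" by (simp add: m_def)
        show "\<exists>r>0. \<forall>x\<in>ball z r \<inter> ball 0 1. v x \<le> \<psi> x + m"
          using \<rho>0 above by blast
      qed
      then have "dp - dm \<ge> 0" using sol zT pw unfolding flat_visc_solution_def by blast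
      moreover have "dp - dm = - 2 * t" by (simp add: dp_def dm_def axis_def)
      ultimately show False using t0 by simp
    qed
  qed
qed

definition negF :: "('n::finite mat \<Rightarrow> real) \<Rightarrow> 'n mat \<Rightarrow> real" where
  "negF F = (\<lambda>M. - F (- M))"

lemma symm_neg: "A \<in> symm_mats \<Longrightarrow> - A \<in> symm_mats"
  by (simp add: symm_mats_def transpose_def vec_eq_iff)

lemma negF_ell:
  assumes "F \<in> ellipticClass lam Lam"
  shows "negF F \<in> ellipticClass lam Lam"
proof -
  have F0: "F 0 = 0" and ell: "\<And>M N. M \<in> symm_mats \<Longrightarrow> N \<in> symm_mats \<Longrightarrow> psd N \<Longrightarrow>
      lam * mnorm N \<le> F (M + N) - F M \<and> F (M + N) - F M \<le> Lam * mnorm N"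
    using assms by (auto simp: ellipticClass_def)
  have "lam * mnorm N \<le> negF F (M + N) - negF F M \<and> negF F (M + N) - negF F M \<le> Lam * mnorm N"
    if "M \<in> symm_mats" "N \<in> symm_mats" "psd N" for M N
  proof -
    have M': "- M - N \<in> symm_mats" using that by (intro symm_diff symm_neg)
    have "negF F (M + N) - negF F M = F ((- M - N) + N) - F (- M - N)"
      by (simp add: negF_def algebra_simps)
    then show ?thesis using ell[OF M' that(2,3)] by simp
  qed
  then show ?thesis using F0 by (simp add: ellipticClass_def negF_def)
qed

lemma mvneg: "(- A) *v (h::real^'n::finite) = - (A *v h)"
  by (simp add: vec_eq_iff matrix_vector_mult_def sum_negf)

lemma C2_neg:
  assumes "C2_on S f Df D2"
  shows "C2_on S (\<lambda>x. - f x) (\<lambda>x. - Df x) (\<lambda>x. - D2 x)"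
  using assms unfolding C2_on_def
proof (intro conjI ballI)
  show "open S" using assms by (simp add: C2_on_def)
  show "continuous_on S (\<lambda>x. - D2 x)" using assms by (auto simp: C2_on_def intro!: continuous_intros)
  fix x assume x: "x \<in> S"
  have d1: "(f has_derivative (\<lambda>h. Df x \<bullet> h)) (at x)" and
       d2: "(Df has_derivative (\<lambda>h. D2 x *v h)) (at x)" using assms x by (auto simp: C2_on_def)
  show "((\<lambda>x. - f x) has_derivative (\<lambda>h. - Df x \<bullet> h)) (at x)"
    using has_derivative_minus[OF d1] by simp
  show "((\<lambda>x. - Df x) has_derivative (\<lambda>h. - D2 x *v h)) (at x)"
    using has_derivative_minus[OF d2] by (simp add: mvneg)
qed

lemma touches_neg:
  "touches_above Om phi (\<lambda>x. - v x) x0 \<longleftrightarrow> touches_below Om (\<lambda>x. - phi x) v x0"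
  "touches_below Om phi (\<lambda>x. - v x) x0 \<longleftrightarrow> touches_above Om (\<lambda>x. - phi x) v x0"
  "touches_above Om (\<lambda>x. - phi x) (\<lambda>x. - v x) x0 \<longleftrightarrow> touches_below Om phi v x0"
  unfolding touches_above_def touches_below_def
  by (auto simp: minus_le_iff le_minus_iff)

lemma pw_neg:
  assumes "pw_C2_test k x0 phi dp dm"
  shows "pw_C2_test k x0 (\<lambda>x. - phi x) (- dp) (- dm)"
proof -
  obtain \<delta> phip Dp D2p phim Dm D2m where d: "\<delta> > 0" "continuous_on (ball x0 \<delta>) phi"
    "C2_on (ball x0 \<delta>) phip Dp D2p" "C2_on (ball x0 \<delta>) phim Dm D2m"
    "\<forall>x\<in>cball x0 \<delta>. x $ k \<ge> 0 \<longrightarrow> phi x = phip x"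
    "\<forall>x\<in>cball x0 \<delta>. x $ k \<le> 0 \<longrightarrow> phi x = phim x"
    "dp = Dp x0 $ k" "dm = Dm x0 $ k"
    using assms unfolding pw_C2_test_def by blast
  have c: "continuous_on (ball x0 \<delta>) (\<lambda>x. - phi x)" using d(2) by (intro continuous_intros)
  have "\<delta> > 0 \<and> continuous_on (ball x0 \<delta>) (\<lambda>x. - phi x) \<and>
     C2_on (ball x0 \<delta>) (\<lambda>x. - phip x) (\<lambda>x. - Dp x) (\<lambda>x. - D2p x) \<and>
     C2_on (ball x0 \<delta>) (\<lambda>x. - phim x) (\<lambda>x. - Dm x) (\<lambda>x. - D2m x) \<and>
     (\<forall>x\<in>cball x0 \<delta>. x $ k \<ge> 0 \<longrightarrow> - phi x = - phip x) \<and>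
     (\<forall>x\<in>cball x0 \<delta>. x $ k \<le> 0 \<longrightarrow> - phi x = - phim x) \<and>
     - dp = (- Dp x0) $ k \<and> - dm = (- Dm x0) $ k"
    using C2_neg[OF d(3)] C2_neg[OF d(4)] d c by auto
  then show ?thesis unfolding pw_C2_test_def by blast
qed

lemma super_to_sub:
  assumes "visc_super_at F Om v x0"
  shows "visc_sub_at (negF F) Om (\<lambda>x. - v x) x0"
  unfolding visc_sub_at_def
proof (intro allI impI, elim conjE)
  fix phi Dphi D2phi U
  assume "x0 \<in> U" "C2_on U phi Dphi D2phi" "touches_above Om phi (\<lambda>x. - v x) x0"
  then have "F (- D2phi x0) \<le> 0"
    using assms C2_neg unfolding visc_super_at_def touches_neg by blast
  then show "0 \<le> negF F (D2phi x0)" by (simp add: negF_def)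
qed

lemma sub_to_super:
  assumes "visc_sub_at F Om v x0"
  shows "visc_super_at (negF F) Om (\<lambda>x. - v x) x0"
  unfolding visc_super_at_def
proof (intro allI impI, elim conjE)
  fix phi Dphi D2phi U
  assume "x0 \<in> U" "C2_on U phi Dphi D2phi" "touches_below Om phi (\<lambda>x. - v x) x0"
  then have "F (- D2phi x0) \<ge> 0"
    using assms C2_neg unfolding visc_sub_at_def touches_neg by blast
  then show "negF F (D2phi x0) \<le> 0" by (simp add: negF_def)
qed

lemma negsub_to_super:
  assumes "visc_sub_at (negF F) Om (\<lambda>x. - v x) x0"
  shows "visc_super_at F Om v x0"
  unfolding visc_super_at_def
proof (intro allI impI, elim conjE)
  fix phi Dphi D2phi U
  assume a: "x0 \<in> U" "C2_on U phi Dphi D2phi" "touches_below Om phi v x0"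
  have "touches_above Om (\<lambda>x. - phi x) (\<lambda>x. - v x) x0" using a(3) touches_neg(3) by blast
  then have "negF F (- D2phi x0) \<ge> 0"
    using assms C2_neg[OF a(2)] a(1) unfolding visc_sub_at_def by blast
  then show "F (D2phi x0) \<le> 0" by (simp add: negF_def)
qed

lemma flat_neg:
  assumes "flat_visc_solution F k v"
  shows "flat_visc_solution (negF F) k (\<lambda>x. - v x)"
  unfolding flat_visc_solution_def
proof (intro conjI ballI allI impI)
  show "continuous_on (ball 0 1) (\<lambda>x. - v x)"
    using assms by (auto simp: flat_visc_solution_def intro!: continuous_intros)
  fix x0 assume "x0 \<in> half_ball_pos k \<union> half_ball_neg k"
  then show "visc_sub_at (negF F) (ball 0 1) (\<lambda>x. - v x) x0"
    "visc_super_at (negF F) (ball 0 1) (\<lambda>x. - v x) x0"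
    using assms super_to_sub sub_to_super unfolding flat_visc_solution_def by blast+
next
  fix x0 phi dp dm
  assume x0: "x0 \<in> flat_T k" and pw: "pw_C2_test k x0 phi dp dm"
  have T: "\<And>phi dp dm. pw_C2_test k x0 phi dp dm \<Longrightarrow>
        (touches_above (ball 0 1) phi v x0 \<longrightarrow> dp - dm \<ge> 0) \<and>
        (touches_below (ball 0 1) phi v x0 \<longrightarrow> dp - dm \<le> 0)"
    using assms x0 unfolding flat_visc_solution_def by blast
  note T2 = T[OF pw_neg[OF pw]]
  {
    assume "touches_above (ball 0 1) phi (\<lambda>x. - v x) x0"
    then show "0 \<le> dp - dm" using T2 touches_neg(1) by fastforce
  next
    assume "touches_below (ball 0 1) phi (\<lambda>x. - v x) x0"
    then show "dp - dm \<le> 0" using T2 touches_neg(2) by fastforce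
  }
qed

lemma flat_to_visc:
  fixes F :: "'n::finite mat \<Rightarrow> real" and k :: 'n
  assumes F: "F \<in> ellipticClass lam Lam" and lam: "0 < lam" "lam \<le> Lam"
    and sol: "flat_visc_solution F k v"
  shows "visc_solution F (ball 0 1) v"
  unfolding visc_solution_def
proof (rule conjI, goal_cases)
  case 1 show ?case using sol by (simp add: flat_visc_solution_def)
next
  case 2 show ?case
  proof
  fix x0 :: "real^'n" assume x0: "x0 \<in> ball 0 1"
  consider "x0 \<in> half_ball_pos k \<union> half_ball_neg k" | "x0 \<in> flat_T k"
    using x0 by (auto simp: half_ball_pos_def half_ball_neg_def flat_T_def) (metis linorder_neqE_linordered_idom)
  then show "visc_sub_at F (ball 0 1) v x0 \<and> visc_super_at F (ball 0 1) v x0"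
  proof cases
    case 1 then show ?thesis using sol by (simp add: flat_visc_solution_def)
  next
    case 2
    have "visc_sub_at (negF F) (ball 0 1) (\<lambda>x. - v x) x0"
      by (rule sub_on_T[OF negF_ell[OF F] lam flat_neg[OF sol] 2])
    then show ?thesis using sub_on_T[OF F lam sol 2] negsub_to_super by blast
  qed
  qed
qed


theorem mainTheorem17:
  fixes lam Lam a :: real
  assumes "0 < lam" and "lam \<le> Lam"
    and "univ_C2a_exponent TYPE('n::finite) lam Lam a"
  shows "\<exists>C>0. \<forall>(F::'n mat \<Rightarrow> real) (v::real^'n \<Rightarrow> real) (k::'n).
           F \<in> ellipticClass lam Lam \<and> concave_on symm_mats F \<and>
           flat_visc_solution F k v \<and> bounded (v ` ball 0 1) \<longrightarrow>
           (\<exists>Dv D2v. in_C2a (ball 0 (1/2)) a v Dv D2v \<and>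
              C2a_norm (ball 0 (1/2)) a v Dv D2v \<le> C * sup_norm (ball 0 1) v)"
  proof -
  obtain C where C: "C > 0" and reg: "\<And>(F::'n mat \<Rightarrow> real) w. F \<in> ellipticClass lam Lam \<and> concave_on symm_mats F \<and>
        visc_solution F (ball 0 1) w \<and> bounded (w ` ball 0 1) \<Longrightarrow>
        (\<exists>Dw D2w. in_C2a (ball 0 (1/2)) a w Dw D2w \<and>
           C2a_norm (ball 0 (1/2)) a w Dw D2w \<le> C * sup_norm (ball 0 1) w)"
    using assms(3) unfolding univ_C2a_exponent_def by blast
  show ?thesis
  proof (intro exI[of _ C] conjI C allI impI)
    fix F :: "'n mat \<Rightarrow> real" and v :: "real^'n \<Rightarrow> real" and k :: 'n
    assume h: "F \<in> ellipticClass lam Lam \<and> concave_on symm_mats F \<and>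
           flat_visc_solution F k v \<and> bounded (v ` ball 0 1)"
    then have "visc_solution F (ball 0 1) v" using flat_to_visc assms(1,2) by blast
    then show "\<exists>Dv D2v. in_C2a (ball 0 (1/2)) a v Dv D2v \<and>
              C2a_norm (ball 0 (1/2)) a v Dv D2v \<le> C * sup_norm (ball 0 1) v"
      using reg h by blast
  qed
qed

end
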